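(* In Dallal's model parameterized by $(\gamma,U,V)$, the reference prior for the reversed group ordering $\{\gamma\}$ first and then $\{U,V\}$, namely $\pi(\gamma,u,v)=\pi(u,v\mid\gamma)\pi(\gamma)$ with $\pi(u,v\mid\gamma)=\frac{(h_U(u)h_V(v))^{1/2}}{\int_0^1\!\int_0^1 (h_U h_V)^{1/2}\,du\,dv}$ and $\pi(\gamma)$ the normalized version of $\exp\{\tfrac12\int_0^1\!\int_0^1 \pi(u,v\mid\gamma)\log h_\gamma(\gamma,u,v)\,du\,dv\}$ on $(0,1)$, coincides with $$\pi_R(\gamma,u,v)=\frac{\sqrt2}{\pi}\frac{\gamma^{-1/2}(1-\gamma)^{-1/2}}{1+\gamma}\cdot\frac{u^{-1/2}(1-u)^{-1/2}}{B(1/2,1/2)}\cdot\frac{v^{-1/2}(1-v)^{-1/2}}{B(1/2,1/2)},\qquad 0<\gamma,u,v<1 .$$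
   Context: Dallal's model: two independent groups $i=0,1$ with fixed sizes $m_{+0},m_{+1}$; in group $i$ the counts $(m_{0i},m_{1i},m_{2i})$ are trinomial with probabilities $1-(1+\gamma)\lambda_i$, $2\gamma\lambda_i$, $(1-\gamma)\lambda_i$, where $0<\gamma<1$, $0<\lambda_i<1/(1+\gamma)$. Set $U=(1+\gamma)\lambda_0$, $V=(1+\gamma)\lambda_1$, $r=m_{+1}/m_{+0}$. The expected Fisher information in $(\gamma,U,V)$ is diagonal with entries $h_\gamma(\gamma,u,v)=\frac{2m_{+0}(u+rv)}{\gamma(1-\gamma)(1+\gamma)^2}$, $h_U(u)=\frac{m_{+0}}{u(1-u)}$, $h_V(v)=\frac{m_{+1}}{v(1-v)}$. $B$ denotes the Beta function. *)

theory Defs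
  imports "HOL-Analysis.Analysis"
begin

text \<open>Dallal's model: group sizes m0 = m_{+0}, m1 = m_{+1} (positive naturals), r = m1/m0.
  Expected Fisher information entries in the (gamma, U, V) parametrisation.\<close>

definition h_gamma :: "nat \<Rightarrow> nat \<Rightarrow> real \<Rightarrow> real \<Rightarrow> real \<Rightarrow> real" where
  "h_gamma m0 m1 g u v =
     2 * real m0 * (u + (real m1 / real m0) * v) / (g * (1 - g) * (1 + g)^2)"

definition h_U :: "nat \<Rightarrow> real \<Rightarrow> real" where
  "h_U m0 u = real m0 / (u * (1 - u))"

definition h_V :: "nat \<Rightarrow> real \<Rightarrow> real" where
  "h_V m1 v = real m1 / (v * (1 - v))"

definition cond_prior :: "nat \<Rightarrow> nat \<Rightarrow> real \<Rightarrow> real \<Rightarrow> real \<Rightarrow> real" where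
  "cond_prior m0 m1 g u v =
     sqrt (h_U m0 u * h_V m1 v) /
     (LBINT u':{0<..<1::real}. LBINT v':{0<..<1::real}. sqrt (h_U m0 u' * h_V m1 v'))"

definition marg_prior_unnorm :: "nat \<Rightarrow> nat \<Rightarrow> real \<Rightarrow> real" where
  "marg_prior_unnorm m0 m1 g =
     exp (1/2 * (LBINT u:{0<..<1::real}. LBINT v:{0<..<1::real}.
                   cond_prior m0 m1 g u v * ln (h_gamma m0 m1 g u v)))"

definition marg_prior :: "nat \<Rightarrow> nat \<Rightarrow> real \<Rightarrow> real" where
  "marg_prior m0 m1 g =
     marg_prior_unnorm m0 m1 g / (LBINT g':{0<..<1::real}. marg_prior_unnorm m0 m1 g')"

definition ref_prior :: "nat \<Rightarrow> nat \<Rightarrow> real \<Rightarrow> real \<Rightarrow> real \<Rightarrow> real" where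
  "ref_prior m0 m1 g u v = cond_prior m0 m1 g u v * marg_prior m0 m1 g"

definition pi_R :: "real \<Rightarrow> real \<Rightarrow> real \<Rightarrow> real" where
  "pi_R g u v =
     sqrt 2 / pi * (g powr (-1/2) * (1 - g) powr (-1/2) / (1 + g)) *
     (u powr (-1/2) * (1 - u) powr (-1/2) / Beta (1/2) (1/2)) *
     (v powr (-1/2) * (1 - v) powr (-1/2) / Beta (1/2) (1/2))"

end

theory Submission imports Defs "HOL-Real_Asymp.Real_Asymp" begin

lemma lim0: "((\<lambda>g::real. sqrt 2 * arctan (sqrt (2*g/(1-g)))) \<longlongrightarrow> 0) (at_right 0)"
  by real_asymp
lemma lim1: "((\<lambda>g::real. sqrt 2 * arctan (sqrt (2*g/(1-g)))) \<longlongrightarrow> sqrt 2 * (pi/2)) (at_left 1)"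
  by (real_asymp simp: sqrt_def)

lemma alg: "c \<noteq> 0 \<Longrightarrow> (A::real) > 0 \<Longrightarrow> y > 0 \<Longrightarrow> z > 0 \<Longrightarrow>
  c * (y/z * (B/(c*A)/2 * (2/y^2))) = B*(1/y)/(A*z)"
  by (simp add: field_simps power2_eq_square)

lemma derG: assumes "0<x" "x<1"
  shows "((\<lambda>g::real. sqrt 2 * arctan (sqrt (2*g/(1-g)))) has_real_derivative
     (x powr (-1/2) * (1-x) powr (-1/2) / (1+x))) (at x)"
proof -
  have s: "sqrt (2*x/(1-x)) > 0" "2*x/(1-x) > 0" using assms by simp_all
  have d: "((\<lambda>g::real. sqrt 2 * arctan (sqrt (2*g/(1-g)))) has_real_derivative
     sqrt 2 * (inverse (1 + (sqrt (2*x/(1-x)))\<^sup>2) * (inverse (sqrt (2*x/(1-x))) / 2 * ((2 * (1-x) + 2*x) / (1-x)^2)))) (at x)"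
    using assms s
    by (auto intro!: derivative_eq_intros simp: power2_eq_square) (use s(2) in linarith)
  have "sqrt 2 * (inverse (1 + (sqrt (2*x/(1-x)))\<^sup>2) * (inverse (sqrt (2*x/(1-x))) / 2 * ((2 * (1-x) + 2*x) / (1-x)^2)))
     = x powr (-1/2) * (1-x) powr (-1/2) / (1+x)"
  proof -
    have e1: "(sqrt (2*x/(1-x)))\<^sup>2 = 2*x/(1-x)" using assms by simp
    have e2: "sqrt (2*x/(1-x)) = sqrt 2 * sqrt x / sqrt (1-x)" using assms by (simp add: real_sqrt_divide real_sqrt_mult)
    have e3: "x powr (-1/2) = 1 / sqrt x" using assms by (simp add: powr_minus_divide powr_half_sqrt)
    have e4: "(1-x) powr (-1/2) = 1 / sqrt (1-x)" using assms by (simp add: powr_minus_divide powr_half_sqrt)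
    have sx: "sqrt x > 0" "sqrt (1-x) > 0" using assms by auto
    have sq: "sqrt (1-x) * sqrt (1-x) = 1-x" "sqrt 2 * sqrt 2 = 2" using assms by auto
    have i1: "inverse (1 + 2*x/(1-x)) = (1-x)/(1+x)" using assms by (simp add: field_simps)
    have i2: "(2 * (1-x) + 2*x) = (2::real)" by simp
    have i3: "inverse (sqrt 2 * sqrt x / sqrt (1-x)) = sqrt (1-x) / (sqrt 2 * sqrt x)" by simp
    have "sqrt 2 * ((1-x)/(1+x) * (sqrt (1-x) / (sqrt 2 * sqrt x) / 2 * (2 / (sqrt (1-x) * sqrt (1-x))^2)))
       = 1 / sqrt x * (1 / sqrt (1-x)) / (1+x)"
    proof -
      have "sqrt 2 * ((1-x)/(1+x) * (sqrt (1-x) / (sqrt 2 * sqrt x) / 2 * (2 / (sqrt (1-x) * sqrt (1-x))^2)))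
         = sqrt (1-x) * (1 / (1-x)) / (sqrt x * (1+x))"
        using assms sx by (simp only: sq(1)) (rule alg, auto)
      also have "sqrt (1-x) * (1 / (1-x)) = 1 / sqrt (1-x)"
        using sx by (metis sq(1) divide_divide_eq_right divide_self_if mult_1 times_divide_eq_left nonzero_mult_div_cancel_left less_irrefl)
      finally show ?thesis by simp
    qed
    then show ?thesis unfolding e1 i1 i2 e2[symmetric] i3[unfolded e2[symmetric]] e3 e4 sq(1) .
  qed
  with d show ?thesis by simp
qed

definition wf :: "real \<Rightarrow> real" where "wf x = x powr (-1/2) * (1-x) powr (-1/2) / (1+x)"

lemma wf_int: "set_integrable lborel {0<..<1} wf" "(LBINT g:{0<..<1}. wf g) = sqrt 2 * (pi/2)"
proof -
  note ftc = interval_integral_FTC_nonneg[of "ereal 0" "ereal 1"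
     "\<lambda>g::real. sqrt 2 * arctan (sqrt (2*g/(1-g)))" wf 0 "sqrt 2 * (pi/2)"]
  have c: "isCont wf x" if "0<x" "x<1" for x
    unfolding wf_def using that by (intro continuous_intros) auto
  have A: "(((\<lambda>g::real. sqrt 2 * arctan (sqrt (2*g/(1-g)))) \<circ> real_of_ereal) \<longlongrightarrow> 0) (at_right (ereal 0))"
    unfolding ereal_tendsto_simps1 by (rule lim0)
  have B: "(((\<lambda>g::real. sqrt 2 * arctan (sqrt (2*g/(1-g)))) \<circ> real_of_ereal) \<longlongrightarrow> sqrt 2 * (pi/2)) (at_left (ereal 1))"
    unfolding ereal_tendsto_simps1 by (rule lim1)
  have r: "set_integrable lborel (einterval (ereal 0) (ereal 1)) wf \<and> (LBINT x=ereal 0..ereal 1. wf x) = sqrt 2 * (pi/2) - 0"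
    using ftc A B c derG unfolding wf_def by (auto simp: wf_def)
  then show "set_integrable lborel {0<..<1} wf" by simp
  from r show "(LBINT g:{0<..<1}. wf g) = sqrt 2 * (pi/2)"
    by (simp add: interval_lebesgue_integral_def)
qed


definition qf :: "real \<Rightarrow> real" where "qf x = x powr (-1/2) * (1-x) powr (-1/2)"

lemma Beta_half: "Beta (1/2) (1/2) = pi"
  by (simp add: Beta_def Gamma_one_half_real)

lemma beta_set: assumes "a>0" "b>(0::real)"
  shows "set_integrable lborel {0<..<1} (\<lambda>t. t powr (a - 1) * (1 - t) powr (b - 1))"
    "(LBINT t:{0<..<1}. t powr (a - 1) * (1 - t) powr (b - 1)) = Beta a b"
proof -
  show i: "set_integrable lborel {0<..<1} (\<lambda>t. t powr (a - 1) * (1 - t) powr (b - 1))"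
    by (rule set_integrable_subset[OF integrable_Beta[OF assms]]) auto
  have "((\<lambda>t. t powr (a - 1) * (1 - t) powr (b - 1)) has_integral Beta a b) {0<..<1}"
    using has_integral_Beta_real[OF assms] by (simp add: has_integral_Icc_iff_Ioo)
  then show "(LBINT t:{0<..<1}. t powr (a - 1) * (1 - t) powr (b - 1)) = Beta a b"
    using set_borel_integral_eq_integral(2)[OF i] by (simp add: has_integral_iff)
qed

lemma qf_int: "set_integrable lborel {0<..<1} qf" "(LBINT x:{0<..<1}. qf x) = pi"
proof -
  have e: "qf = (\<lambda>t. t powr (1/2 - 1) * (1 - t) powr (1/2 - 1))" by (auto simp: qf_def fun_eq_iff)
  show "set_integrable lborel {0<..<1} qf" "(LBINT x:{0<..<1}. qf x) = pi"
    unfolding e using beta_set[of "1/2" "1/2"] by (simp_all only: Beta_half)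
qed

lemma q34_int: "set_integrable lborel {0<..<1} (\<lambda>x::real. x powr (1/4-1) * (1-x) powr (1/2-1))"
  using beta_set(1)[of "1/4" "1/2"] by simp

lemma qf_alt: "0<x \<Longrightarrow> x<1 \<Longrightarrow> qf x = 1 / sqrt (x*(1-x))"
  by (simp add: qf_def powr_minus_divide powr_half_sqrt real_sqrt_mult)

lemma qf_pos: "0<x \<Longrightarrow> x<1 \<Longrightarrow> qf x > 0"
  by (simp add: qf_def)

lemma ln_bound: assumes "0<x" "x<(1::real)" shows "\<bar>ln x\<bar> \<le> 4 * x powr (-1/4)"
proof -
  have "ln (x powr (-1/4)) \<le> x powr (-1/4) - 1" using assms by (intro ln_le_minus_one) auto
  then have "-(1/4) * ln x \<le> x powr (-1/4) - 1" using assms by (simp add: ln_powr)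
  moreover have "ln x < 0" using assms by simp
  ultimately show ?thesis by simp
qed

lemma qf_ln: assumes "0<x" "x<(1::real)"
  shows "qf x * \<bar>ln x\<bar> \<le> 4 * (x powr (1/4-1) * (1-x) powr (1/2-1))"
proof -
  have "qf x * \<bar>ln x\<bar> \<le> qf x * (4 * x powr (-1/4))"
    using ln_bound[OF assms] qf_pos[OF assms] by (intro mult_left_mono) auto
  also have "\<dots> = 4 * (x powr (-1/2) * x powr (-1/4) * (1-x) powr (-1/2))" by (simp add: qf_def)
  also have "x powr (-1/2) * x powr (-1/4) = x powr (-3/4)"
    using assms by (simp add: powr_add[symmetric])
  finally show ?thesis by simp
qed

lemma qf_meas[measurable]: "qf \<in> borel_measurable borel"
  unfolding qf_def by measurable


definition Dd :: "real \<Rightarrow> real \<Rightarrow> real" where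
  "Dd r v = qf v * (\<bar>ln (1+r)\<bar> + \<bar>ln r\<bar>) + 4 * (v powr (1/4-1) * (1-v) powr (1/2-1))"

definition Ff :: "real \<Rightarrow> real \<Rightarrow> real" where
  "Ff r u = (LBINT v:{0<..<1}. qf v * ln (u + r * v))"

lemma Dd_int: "set_integrable lborel {0<..<1} (Dd r)"
proof -
  have e: "Dd r = (\<lambda>v. qf v * (\<bar>ln (1+r)\<bar> + \<bar>ln r\<bar>) + 4 * (v powr (1/4-1) * (1-v) powr (1/2-1)))"
    by (simp add: fun_eq_iff Dd_def)
  show ?thesis unfolding e
    by (intro set_integral_add set_integrable_mult_left set_integrable_mult_right qf_int q34_int)
qed

lemma Dd_bound: assumes r: "r>0" and "0<u" "u<1" "0<v" "v<1"
  shows "\<bar>qf v * ln (u + r * v)\<bar> \<le> Dd r v"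
proof -
  have l1: "ln (u + r * v) \<le> ln (1+r)" proof -
    have "r * v \<le> r" using assms by (simp add: mult_le_cancel_left1)
    moreover have "r * v > 0" using assms by simp
    ultimately have "u + r * v \<le> 1 + r" "u + r * v > 0" using assms by linarith+
    then show ?thesis using ln_le_cancel_iff[of "u + r * v" "1+r"] assms by simp
  qed
  have l2: "ln (r * v) \<le> ln (u + r * v)"
  proof -
    have "r * v > 0" using assms by simp
    note rv = this
    have pos2: "u + r * v > 0" using rv assms by linarith
    have eq: "(ln (r * v) \<le> ln (u + r * v)) = (r * v \<le> u + r * v)"
      by (rule ln_le_cancel_iff[OF rv pos2])
    show ?thesis unfolding eq using assms by linarith
  qed
  have l3: "ln (r * v) = ln r + ln v" using assms by (simp add: ln_mult)
  have "\<bar>ln (u + r * v)\<bar> \<le> \<bar>ln (1+r)\<bar> + \<bar>ln r\<bar> + \<bar>ln v\<bar>" using l1 l2 l3 by linarith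
  then have "qf v * \<bar>ln (u + r * v)\<bar> \<le> qf v * (\<bar>ln (1+r)\<bar> + \<bar>ln r\<bar> + \<bar>ln v\<bar>)"
    using qf_pos[of v] assms by (intro mult_left_mono) auto
  also have "\<dots> \<le> Dd r v" unfolding Dd_def using qf_ln[of v] assms by (simp add: algebra_simps)
  finally show ?thesis using qf_pos[of v] assms by (simp add: abs_mult)
qed

lemma inner_int: assumes "r>0" "0<u" "u<1"
  shows "set_integrable lborel {0<..<1} (\<lambda>v. qf v * ln (u + r * v))"
proof (rule set_integrable_bound[OF Dd_int])
  show "set_borel_measurable lborel {0<..<1} (\<lambda>v. qf v * ln (u + r * v))"
    unfolding set_borel_measurable_def by measurable
  show "AE x in lborel. x \<in> {0<..<1} \<longrightarrow> norm (qf x * ln (u + r * x)) \<le> norm (Dd r x)"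
    using Dd_bound[OF assms] by (auto intro!: AE_I2 order.trans[OF _ abs_ge_self])
qed

lemma Ff_bound: assumes "r>0" "0<u" "u<1"
  shows "\<bar>Ff r u\<bar> \<le> (LBINT v:{0<..<1}. Dd r v)"
proof -
  have "\<bar>Ff r u\<bar> \<le> (LBINT v:{0<..<1}. norm (qf v * ln (u + r * v)))"
    unfolding Ff_def using set_integral_norm_bound[OF inner_int[OF assms]] by simp
  also have "\<dots> \<le> (LBINT v:{0<..<1}. Dd r v)"
    using inner_int[OF assms] Dd_int Dd_bound[OF assms]
    by (intro set_integral_mono) (auto simp: set_integrable_abs)
  finally show ?thesis .
qed

lemma Ff_meas: "Ff r \<in> borel_measurable lborel"
proof -
  have "(\<lambda>u. LINT v|lborel. indicator {0<..<1} v *\<^sub>R (qf v * ln (u + r * v))) \<in> borel_measurable lborel"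
    by (rule lborel.borel_measurable_lebesgue_integral) measurable
  then show ?thesis unfolding Ff_def[abs_def] set_lebesgue_integral_def by simp
qed

lemma outer_int: assumes "r>0"
  shows "set_integrable lborel {0<..<1} (\<lambda>u. qf u * Ff r u)"
proof (rule set_integrable_bound[OF set_integrable_mult_left[OF qf_int(1), of "LBINT v:{0<..<1}. Dd r v"]])
  show "set_borel_measurable lborel {0<..<1} (\<lambda>u. qf u * Ff r u)"
    unfolding set_borel_measurable_def using Ff_meas by measurable
  show "AE x in lborel. x \<in> {0<..<1} \<longrightarrow> norm (qf x * Ff r x) \<le> norm (qf x * (LBINT v:{0<..<1}. Dd r v))"
    using Ff_bound[OF assms] qf_pos less_imp_le[OF qf_pos]
    by (auto intro!: AE_I2 simp: abs_mult intro!: mult_left_mono order.trans[OF _ abs_ge_self])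
qed


lemma cong01: "(\<And>x::real. 0<x \<Longrightarrow> x<1 \<Longrightarrow> f x = g x) \<Longrightarrow> (LBINT x:{0<..<1}. f x) = (LBINT x:{0<..<1}. g x)"
  by (rule set_lebesgue_integral_cong) auto

lemma sqrt_hUV: assumes "0<u" "u<1" "0<v" "v<1"
  shows "sqrt (h_U m0 u * h_V m1 v) = sqrt (real m0 * real m1) * qf u * qf v"
proof -
  have "h_U m0 u * h_V m1 v = (real m0 * real m1) * (1 / (u * (1-u))) * (1 / (v * (1-v)))"
    by (simp add: h_U_def h_V_def)
  then show ?thesis using assms
    by (simp add: qf_alt real_sqrt_mult real_sqrt_divide)
qed

lemma den: "(LBINT u':{0<..<1}. LBINT v':{0<..<1}. sqrt (h_U m0 u' * h_V m1 v')) = sqrt (real m0 * real m1) * pi * pi"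
proof -
  have "(LBINT u':{0<..<1}. LBINT v':{0<..<1}. sqrt (h_U m0 u' * h_V m1 v'))
      = (LBINT u':{0<..<1}. (sqrt (real m0 * real m1) * pi) * qf u')"
  proof (rule cong01)
    fix u' :: real assume u': "0 < u'" "u' < 1"
    have "(LBINT v':{0<..<1}. sqrt (h_U m0 u' * h_V m1 v')) = (LBINT v':{0<..<1}. (sqrt (real m0 * real m1) * qf u') * qf v')"
      using u' by (intro cong01) (auto simp: sqrt_hUV)
    also have "\<dots> = (sqrt (real m0 * real m1) * qf u') * pi" by (simp add: qf_int)
    finally show "(LBINT v':{0<..<1}. sqrt (h_U m0 u' * h_V m1 v')) = (sqrt (real m0 * real m1) * pi) * qf u'"
      by simp
  qed
  also have "\<dots> = sqrt (real m0 * real m1) * pi * pi" by (simp add: qf_int)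
  finally show ?thesis .
qed

lemma cond_eq: assumes "m0>0" "m1>0" "0<u" "u<1" "0<v" "v<1"
  shows "cond_prior m0 m1 g u v = qf u * qf v / pi^2"
  unfolding cond_prior_def den using assms by (simp add: sqrt_hUV power2_eq_square)

definition Kf :: "nat \<Rightarrow> real \<Rightarrow> real" where
  "Kf m0 g = ln (2 * real m0) - ln (g*(1-g)*(1+g)^2)"

lemma ln_hg: assumes "m0>0" "m1>0" "0<u" "u<1" "0<v" "v<1" "0<g" "g<1"
  shows "ln (h_gamma m0 m1 g u v) = Kf m0 g + ln (u + (real m1 / real m0) * v)"
proof -
  have p1: "u + (real m1 / real m0) * v > 0" using assms by (simp add: add_pos_pos)
  have p2: "g*(1-g)*(1+g)^2 > 0" using assms by simp
  have p3: "2 * real m0 > 0" using assms by simp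
  have "h_gamma m0 m1 g u v = (2 * real m0) * (u + (real m1 / real m0) * v) / (g*(1-g)*(1+g)^2)"
    by (simp add: h_gamma_def)
  then show ?thesis using p1 p2 p3 by (simp only: ln_divide_pos ln_mult_pos mult_pos_pos Kf_def)
qed


lemma A_eq: assumes m: "m0>0" "m1>0" and g: "0<g" "g<1"
  shows "(LBINT u:{0<..<1}. LBINT v:{0<..<1}. cond_prior m0 m1 g u v * ln (h_gamma m0 m1 g u v))
     = Kf m0 g + (LBINT u:{0<..<1}. qf u * Ff (real m1 / real m0) u) / pi^2"
proof -
  define r where "r = real m1 / real m0"
  have r: "r > 0" using m by (simp add: r_def)
  have "(LBINT u:{0<..<1}. LBINT v:{0<..<1}. cond_prior m0 m1 g u v * ln (h_gamma m0 m1 g u v))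
      = (LBINT u:{0<..<1}. (Kf m0 g / pi) * qf u + (1 / pi^2) * (qf u * Ff r u))"
  proof (rule cong01)
    fix u :: real assume u: "0<u" "u<1"
    have "(LBINT v:{0<..<1}. cond_prior m0 m1 g u v * ln (h_gamma m0 m1 g u v))
        = (LBINT v:{0<..<1}. (qf u / pi^2 * Kf m0 g) * qf v + (qf u / pi^2) * (qf v * ln (u + r * v)))"
      using u m g by (intro cong01) (simp add: cond_eq ln_hg r_def algebra_simps)
    also have "\<dots> = (qf u / pi^2 * Kf m0 g) * pi + (qf u / pi^2) * Ff r u"
      using inner_int[OF r u] qf_int by (simp add: Ff_def)
    finally show "(LBINT v:{0<..<1}. cond_prior m0 m1 g u v * ln (h_gamma m0 m1 g u v))
      = (Kf m0 g / pi) * qf u + (1 / pi^2) * (qf u * Ff r u)"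
      by (simp add: power2_eq_square)
  qed
  also have "\<dots> = (Kf m0 g / pi) * pi + (1 / pi^2) * (LBINT u:{0<..<1}. qf u * Ff r u)"
    using outer_int[OF r] qf_int by simp
  finally show ?thesis by (simp add: r_def)
qed

lemma expK: assumes m: "m0>0" and g: "0<g" "g<1"
  shows "exp (Kf m0 g / 2) = sqrt (2 * real m0) * wf g"
proof -
  have p2: "g * (1-g) * (1+g)^2 > 0" using g by simp
  have p3: "2 * real m0 > 0" using m by simp
  have e: "exp (ln a / 2) = sqrt a" if "a > 0" for a :: real
  proof -
    have "exp (ln a / 2) = a powr (1/2)" using that by (simp add: powr_def)
    then show ?thesis using that by (simp add: powr_half_sqrt)
  qed
  have "exp (Kf m0 g / 2) = exp (ln (2 * real m0) / 2) / exp (ln (g * (1-g) * (1+g)^2) / 2)"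
    by (simp add: Kf_def diff_divide_distrib exp_diff)
  also have "\<dots> = sqrt (2 * real m0) / sqrt (g * (1-g) * (1+g)^2)" using e p2 p3 by simp
  also have "sqrt (g * (1-g) * (1+g)^2) = sqrt g * sqrt (1-g) * (1+g)"
    using g by (simp add: real_sqrt_mult)
  also have "wf g = 1 / sqrt g * (1 / sqrt (1-g)) / (1+g)"
    using g by (simp add: wf_def powr_minus_divide powr_half_sqrt)
  ultimately show ?thesis by simp
qed

lemma marg_unnorm_eq: assumes m: "m0>0" "m1>0" and g: "0<g" "g<1"
  shows "marg_prior_unnorm m0 m1 g =
     exp ((LBINT u:{0<..<1}. qf u * Ff (real m1 / real m0) u) / pi^2 / 2) * sqrt (2 * real m0) * wf g"
proof -
  have "marg_prior_unnorm m0 m1 g = exp (1/2 * (Kf m0 g + (LBINT u:{0<..<1}. qf u * Ff (real m1 / real m0) u) / pi^2))"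
    unfolding marg_prior_unnorm_def A_eq[OF m g] ..
  also have "\<dots> = exp ((LBINT u:{0<..<1}. qf u * Ff (real m1 / real m0) u) / pi^2 / 2) * exp (Kf m0 g / 2)"
    by (simp add: exp_add[symmetric] algebra_simps add_divide_distrib)
  finally show ?thesis using expK[OF m(1) g] by simp
qed

theorem mainTheorem4:
  fixes m0 m1 :: nat and g u v :: real
  assumes "m0 > 0" and "m1 > 0"
    and "0 < g" and "g < 1" and "0 < u" and "u < 1" and "0 < v" and "v < 1"
  shows "ref_prior m0 m1 g u v = pi_R g u v"
proof -
  define E where "E = exp ((LBINT u:{0<..<1}. qf u * Ff (real m1 / real m0) u) / pi^2 / 2) * sqrt (2 * real m0)"
  have Epos: "E > 0" using assms by (simp add: E_def)
  have mu: "marg_prior_unnorm m0 m1 g' = E * wf g'" if "0<g'" "g'<1" for g'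
    using marg_unnorm_eq[OF assms(1,2) that] by (simp add: E_def)
  have N: "(LBINT g':{0<..<1}. marg_prior_unnorm m0 m1 g') = E * (sqrt 2 * (pi/2))"
  proof -
    have "(LBINT g':{0<..<1}. marg_prior_unnorm m0 m1 g') = (LBINT g':{0<..<1}. E * wf g')"
      by (rule cong01) (simp add: mu)
    also have "\<dots> = E * (sqrt 2 * (pi/2))" using wf_int by simp
    finally show ?thesis .
  qed
  have mp: "marg_prior m0 m1 g = wf g / (sqrt 2 * (pi/2))"
    unfolding marg_prior_def N mu[OF assms(3,4)] using Epos by simp
  have s2: "sqrt 2 * sqrt 2 = (2::real)" by simp
  have "ref_prior m0 m1 g u v = qf u * qf v / pi^2 * (wf g / (sqrt 2 * (pi/2)))"
    unfolding ref_prior_def mp cond_eq[OF assms(1,2,5-8)] ..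
  also have "\<dots> = sqrt 2 / pi * wf g * (qf u / pi) * (qf v / pi)"
    using s2 by (simp add: field_simps power2_eq_square)
  also have "\<dots> = pi_R g u v"
    unfolding pi_R_def Beta_half wf_def qf_def ..
  finally show ?thesis .
qed

end
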